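(* Assume (MA1) holds and let $\{x_k\}$ be generated by Algorithm R2N. Suppose the algorithm generates infinitely many successful iterations, that there is $(f+h)_{\rm low}\in\mathbb{R}$ with $(f+h)(x_k)\ge(f+h)_{\rm low}$ for all $k$, and that there is $\alpha>0$ with $\nu_k^{-1/2}\xi_{cp}(x_k,\nu_k^{-1})^{1/2}\ge\alpha$ for all $k\in\mathbb{N}$. Then $\{x_k\}$ is a Cauchy sequence and hence converges.
   Context: Setting: $f:\mathbb{R}^n\to\mathbb{R}$ continuously differentiable, $h:\mathbb{R}^n\to\mathbb{R}\cup\{+\infty\}$ proper lower semicontinuous; $\partial$ = limiting subdifferential; $\|\cdot\|$ Euclidean norm on vectors, spectral norm on matrices. A function $g$ is prox-bounded if there exist $\nu>0$, $x$ with $\inf_y g(y)+\frac1{2\nu}\|y-x\|^2>-\infty$; its threshold is the supremum of such $\nu$. For each $x$, $B(x)$ is symmetric and $\psi(\cdot;x):\mathbb{R}^n\to\mathbb{R}\cup\{+\infty\}$. $\varphi(s;x)=f(x)+\nabla f(x)^Ts+\tfrac12s^TB(x)s$, $m(s;x,\sigma)=\varphi(s;x)+\tfrac12\sigma\|s\|^2+\psi(s;x)$; $\varphi_{cp}(s;x)=f(x)+\nabla f(x)^Ts$, $m_{cp}(s;x,\nu^{-1})=\varphi_{cp}(s;x)+\tfrac12\nu^{-1}\|s\|^2+\psi(s;x)$, $P_{cp}(x,\nu^{-1})=\operatorname{argmin}_s m_{cp}(s;x,\nu^{-1})$, and for $s_{cp}\in P_{cp}(x,\nu^{-1})$, $\xi_{cp}(x,\nu^{-1})=f(x)+h(x)-(\varphi_{cp}(s_{cp};x)+\psi(s_{cp};x))$.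 (MA1): for every $x$, $\psi(\cdot;x)$ is proper, lsc, prox-bounded with threshold $\lambda_x$, $\psi(0;x)=h(x)$, $\partial\psi(0;x)=\partial h(x)$. Algorithm R2N: constants $0<\theta_1<1<\theta_2$, $0<\eta_1\le\eta_2<1$, $0<\gamma_3\le1<\gamma_1\le\gamma_2$; $x_0$ with $h(x_0)<\infty$, $\sigma_0>0$. For $k=0,1,\dots$: choose symmetric $B_k=B(x_k)$; set $\nu_k=\theta_1/(\|B_k\|+\sigma_k)$; compute $s_{k,cp}\in P_{cp}(x_k,\nu_k^{-1})$ and $\xi_{cp}(x_k,\nu_k^{-1})$ (using $s_{k,cp}$); compute $s_k$ with $m(s_k;x_k,\sigma_k)\le m(s_{k,cp};x_k,\sigma_k)$; if $\|s_k\|>\theta_2\|s_{k,cp}\|$, reset $s_k=s_{k,cp}$; compute $\rho_k=\frac{(f+h)(x_k)-(f+h)(x_k+s_k)}{\varphi(0;x_k)+\psi(0;x_k)-\varphi(s_k;x_k)-\psi(s_k;x_k)}$ (extended arithmetic: $\pm\infty\cdot0=0$, $(\pm\infty)/(\pm\infty)=0$); if $\rho_k\ge\eta_1$ set $x_{k+1}=x_k+s_k$, else $x_{k+1}=x_k$; choose $\sigma_{k+1}\in[\gamma_3\sigma_k,\sigma_k]$ if $\rho_k\ge\eta_2$ (very successful), $\sigma_{k+1}\in[\sigma_k,\gamma_1\sigma_k]$ if $\eta_1\le\rho_k<\eta_2$, $\sigma_{k+1}\in[\gamma_1\sigma_k,\gamma_2\sigma_k]$ if $\rho_k<\eta_1$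 (unsuccessful). $\mathcal S=\{k:\rho_k\ge\eta_1\}$ (successful iterations), $\mathcal S_k=\{i\in\mathcal S:i\le k\}$, $\mathcal U=\mathbb N\setminus\mathcal S$, $\mathcal U_k=\{i\in\mathcal U:i\le k\}$. *)

theory Defs
  imports "HOL-Analysis.Analysis"
begin

text \<open>R^n is rendered as real^'n (finite index type 'n), functions with values in
 R \<union> {+\<infinity>} as ereal-valued functions that never take the value -\<infinity>.\<close>

definition proper_fun :: "('a::real_normed_vector \<Rightarrow> ereal) \<Rightarrow> bool" where
  "proper_fun g \<longleftrightarrow> (\<forall>x. g x \<noteq> -\<infinity>) \<and> (\<exists>x. g x \<noteq> \<infinity>)"

definition lsc_fun :: "('a::real_normed_vector \<Rightarrow> ereal) \<Rightarrow> bool" where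
  "lsc_fun g \<longleftrightarrow> (\<forall>x y. y \<longlonglongrightarrow> x \<longrightarrow> g x \<le> liminf (\<lambda>j. g (y j)))"

definition prox_bounded :: "('a::real_normed_vector \<Rightarrow> ereal) \<Rightarrow> bool" where
  "prox_bounded g \<longleftrightarrow>
     (\<exists>\<nu>>0. \<exists>x. (INF y. g y + ereal ((norm (y - x))\<^sup>2 / (2 * \<nu>))) > -\<infinity>)"

definition frechet_subdiff :: "('a::real_inner \<Rightarrow> ereal) \<Rightarrow> 'a \<Rightarrow> 'a set" where
  "frechet_subdiff g x = {v. \<bar>g x\<bar> \<noteq> \<infinity> \<and>
     (\<forall>e>0. \<exists>d>0. \<forall>y. norm (y - x) < d \<longrightarrow>
         g y \<ge> g x + ereal (inner v (y - x) - e * norm (y - x)))}"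

definition limiting_subdiff :: "('a::real_inner \<Rightarrow> ereal) \<Rightarrow> 'a \<Rightarrow> 'a set" where
  "limiting_subdiff g x = {v. \<exists>xs vs. xs \<longlonglongrightarrow> x \<and> (\<lambda>j. g (xs j)) \<longlonglongrightarrow> g x \<and>
     (\<forall>j. vs j \<in> frechet_subdiff g (xs j)) \<and> vs \<longlonglongrightarrow> v}"

text \<open>f :: R^n \<Rightarrow> R, gradient g = \<nabla>f, B x symmetric matrix, psi x s = \<psi>(s;x).\<close>

definition phi :: "(real^'n \<Rightarrow> real) \<Rightarrow> (real^'n \<Rightarrow> real^'n) \<Rightarrow> (real^'n \<Rightarrow> real^'n^'n)
                   \<Rightarrow> real^'n \<Rightarrow> real^'n \<Rightarrow> real" where
  "phi f g B x s = f x + inner (g x) s + 1/2 * inner s (B x *v s)"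

definition model :: "(real^'n \<Rightarrow> real) \<Rightarrow> (real^'n \<Rightarrow> real^'n) \<Rightarrow> (real^'n \<Rightarrow> real^'n^'n)
                   \<Rightarrow> (real^'n \<Rightarrow> real^'n \<Rightarrow> ereal) \<Rightarrow> real^'n \<Rightarrow> real \<Rightarrow> real^'n \<Rightarrow> ereal" where
  "model f g B psi x \<sigma> s = ereal (phi f g B x s + 1/2 * \<sigma> * (norm s)\<^sup>2) + psi x s"

definition phi_cp :: "(real^'n \<Rightarrow> real) \<Rightarrow> (real^'n \<Rightarrow> real^'n) \<Rightarrow> real^'n \<Rightarrow> real^'n \<Rightarrow> real" where
  "phi_cp f g x s = f x + inner (g x) s"

text \<open>m_cp(s;x,\<nu>^{-1}); the argument \<nu> is the step length (so \<nu>^{-1} is the regularisation).\<close>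
definition model_cp :: "(real^'n \<Rightarrow> real) \<Rightarrow> (real^'n \<Rightarrow> real^'n)
                   \<Rightarrow> (real^'n \<Rightarrow> real^'n \<Rightarrow> ereal) \<Rightarrow> real^'n \<Rightarrow> real \<Rightarrow> real^'n \<Rightarrow> ereal" where
  "model_cp f g psi x \<nu> s = ereal (phi_cp f g x s + 1/2 * (1/\<nu>) * (norm s)\<^sup>2) + psi x s"

definition P_cp :: "(real^'n \<Rightarrow> real) \<Rightarrow> (real^'n \<Rightarrow> real^'n)
                   \<Rightarrow> (real^'n \<Rightarrow> real^'n \<Rightarrow> ereal) \<Rightarrow> real^'n \<Rightarrow> real \<Rightarrow> (real^'n) set" where
  "P_cp f g psi x \<nu> = {s. \<forall>t. model_cp f g psi x \<nu> s \<le> model_cp f g psi x \<nu> t}"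

text \<open>\<xi>_cp(x,\<nu>^{-1}) computed with the chosen s_cp\<close>
definition xi_cp :: "(real^'n \<Rightarrow> real) \<Rightarrow> (real^'n \<Rightarrow> real^'n) \<Rightarrow> (real^'n \<Rightarrow> ereal)
                   \<Rightarrow> (real^'n \<Rightarrow> real^'n \<Rightarrow> ereal) \<Rightarrow> real^'n \<Rightarrow> real^'n \<Rightarrow> ereal" where
  "xi_cp f g h psi x scp = ereal (f x) + h x - (ereal (phi_cp f g x scp) + psi x scp)"

text \<open>the ratio \<rho>_k, computed in ereal arithmetic (\<infinity>*0 = 0, \<infinity>/\<infinity> = 0)\<close>
definition rho :: "(real^'n \<Rightarrow> real) \<Rightarrow> (real^'n \<Rightarrow> real^'n) \<Rightarrow> (real^'n \<Rightarrow> ereal)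
                   \<Rightarrow> (real^'n \<Rightarrow> real^'n^'n) \<Rightarrow> (real^'n \<Rightarrow> real^'n \<Rightarrow> ereal)
                   \<Rightarrow> real^'n \<Rightarrow> real^'n \<Rightarrow> ereal" where
  "rho f g h B psi x s =
     (ereal (f x) + h x - (ereal (f (x + s)) + h (x + s))) /
     (ereal (phi f g B x 0) + psi x 0 - (ereal (phi f g B x s) + psi x s))"

definition specnorm :: "real^'n^'n \<Rightarrow> real" where
  "specnorm M = onorm (\<lambda>v. M *v v)"

definition nu_step :: "real \<Rightarrow> real^'n^'n \<Rightarrow> real \<Rightarrow> real" where
  "nu_step \<theta>1 M \<sigma> = \<theta>1 / (specnorm M + \<sigma>)"

definition MA1 :: "(real^'n \<Rightarrow> ereal) \<Rightarrow> (real^'n \<Rightarrow> real^'n \<Rightarrow> ereal) \<Rightarrow> bool" where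
  "MA1 h psi \<longleftrightarrow> (\<forall>x. proper_fun (psi x) \<and> lsc_fun (psi x) \<and> prox_bounded (psi x) \<and>
       psi x 0 = h x \<and> limiting_subdiff (psi x) 0 = limiting_subdiff h x)"

text \<open>A run of Algorithm R2N: iterates x, regularisation parameters \<sigma>, Cauchy steps scp,
  tentative steps t (before the safeguard reset) and accepted steps s.\<close>
definition R2N_run ::
  "(real^'n \<Rightarrow> real) \<Rightarrow> (real^'n \<Rightarrow> real^'n) \<Rightarrow> (real^'n \<Rightarrow> ereal)
   \<Rightarrow> (real^'n \<Rightarrow> real^'n^'n) \<Rightarrow> (real^'n \<Rightarrow> real^'n \<Rightarrow> ereal)
   \<Rightarrow> real \<Rightarrow> real \<Rightarrow> real \<Rightarrow> real \<Rightarrow> real \<Rightarrow> real \<Rightarrow> real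
   \<Rightarrow> (nat \<Rightarrow> real^'n) \<Rightarrow> (nat \<Rightarrow> real) \<Rightarrow> (nat \<Rightarrow> real^'n) \<Rightarrow> (nat \<Rightarrow> real^'n)
   \<Rightarrow> (nat \<Rightarrow> real^'n) \<Rightarrow> bool" where
  "R2N_run f g h B psi \<theta>1 \<theta>2 \<eta>1 \<eta>2 \<gamma>1 \<gamma>2 \<gamma>3 x \<sigma> scp t s \<longleftrightarrow>
     0 < \<theta>1 \<and> \<theta>1 < 1 \<and> 1 < \<theta>2 \<and> 0 < \<eta>1 \<and> \<eta>1 \<le> \<eta>2 \<and> \<eta>2 < 1 \<and>
     0 < \<gamma>3 \<and> \<gamma>3 \<le> 1 \<and> 1 < \<gamma>1 \<and> \<gamma>1 \<le> \<gamma>2 \<and>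
     h (x 0) < \<infinity> \<and> \<sigma> 0 > 0 \<and>
     (\<forall>k. let \<nu> = nu_step \<theta>1 (B (x k)) (\<sigma> k);
              \<rho> = rho f g h B psi (x k) (s k)
          in scp k \<in> P_cp f g psi (x k) \<nu> \<and>
             model f g B psi (x k) (\<sigma> k) (t k) \<le> model f g B psi (x k) (\<sigma> k) (scp k) \<and>
             s k = (if norm (t k) > \<theta>2 * norm (scp k) then scp k else t k) \<and>
             x (Suc k) = (if \<rho> \<ge> ereal \<eta>1 then x k + s k else x k) \<and>
             (\<rho> \<ge> ereal \<eta>2 \<longrightarrow> \<gamma>3 * \<sigma> k \<le> \<sigma> (Suc k) \<and> \<sigma> (Suc k) \<le> \<sigma> k) \<and>
             (ereal \<eta>1 \<le> \<rho> \<and> \<rho> < ereal \<eta>2 \<longrightarrow> \<sigma> k \<le> \<sigma> (Suc k) \<and> \<sigma> (Suc k) \<le> \<gamma>1 * \<sigma> k) \<and>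
             (\<rho> < ereal \<eta>1 \<longrightarrow> \<gamma>1 * \<sigma> k \<le> \<sigma> (Suc k) \<and> \<sigma> (Suc k) \<le> \<gamma>2 * \<sigma> k))"

end

theory Submission
  imports Defs
begin

lemma conv_from_decrease:
  fixes x :: "nat \<Rightarrow> 'a::banach" and F :: "nat \<Rightarrow> real"
  assumes d: "\<And>k. norm (x (Suc k) - x k) \<le> K*(F k - F (Suc k))" and lo: "\<And>k. F k \<ge> L" and K: "K>0"
  shows "convergent x"
proof -
  have dec: "F (Suc k) \<le> F k" for k
    using d[of k] K by (smt (verit) norm_ge_zero mult_pos_neg)
  hence "decseq F" by (simp add: decseq_SucI)
  hence mono: "monoseq F" by (simp add: monoseq_def decseq_def)
  have "F k \<le> F 0" for k using \<open>decseq F\<close> by (simp add: decseq_def)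
  hence "Bseq F" using lo by (intro BseqI'[where K="max \<bar>L\<bar> \<bar>F 0\<bar>"]) (smt (verit) real_norm_def)
  hence "convergent F" using mono Bseq_monoseq_convergent by blast
  then obtain c where "F \<longlonglongrightarrow> c" by (auto simp: convergent_def)
  hence "summable (\<lambda>n. F n - F (Suc n))" by (rule telescope_summable')
  hence "summable (\<lambda>n. K * (F n - F (Suc n)))" by (rule summable_mult)
  hence sd: "summable (\<lambda>k. x (Suc k) - x k)"
    by (rule summable_comparison_test[rotated]) (use d in auto)
  have "(\<lambda>n. \<Sum>i<n. x (Suc i) - x i) \<longlonglongrightarrow> suminf (\<lambda>k. x (Suc k) - x k)"
    using sd by (rule summable_LIMSEQ)
  moreover have "(\<Sum>i<n. x (Suc i) - x i) = x n - x 0" for n by (rule sum_lessThan_telescope)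
  ultimately have "(\<lambda>n. x n - x 0) \<longlonglongrightarrow> suminf (\<lambda>k. x (Suc k) - x k)" by simp
  hence "(\<lambda>n. (x n - x 0) + x 0) \<longlonglongrightarrow> suminf (\<lambda>k. x (Suc k) - x k) + x 0"
    by (intro tendsto_intros)
  thus ?thesis by (auto simp: convergent_def)
qed

lemma xiA: "0 < real_of_ereal (ereal a + H - (ereal b + P)) \<Longrightarrow>
   \<exists>Hr Pr. H = ereal Hr \<and> P = ereal Pr \<and> real_of_ereal (ereal a + H - (ereal b + P)) = a + Hr - b - Pr"
  by (cases H; cases P) auto

lemma rhoB: assumes "0 < D" "H' \<noteq> -\<infinity>" "ereal e \<le> (ereal a + ereal Hr - (ereal c + H')) / ereal D" "0<e"
  shows "\<exists>r. H' = ereal r \<and> e * D \<le> a + Hr - c - r"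
  using assms by (cases H') (auto simp: field_simps)

lemma quad_le: "inner v (M *v v) \<le> specnorm M * (norm v)\<^sup>2"
proof -
  have "inner v (M *v v) \<le> norm v * norm (M *v v)" by (rule norm_cauchy_schwarz)
  also have "norm (M *v v) \<le> specnorm M * norm v"
    unfolding specnorm_def by (rule onorm[OF matrix_vector_mul_bounded_linear])
  hence "norm v * norm (M *v v) \<le> norm v * (specnorm M * norm v)" by (simp add: mult_left_mono)
  finally show ?thesis by (simp add: power2_eq_square mult_ac)
qed

lemma specnorm_nonneg: "0 \<le> specnorm M"
  unfolding specnorm_def by (rule onorm_pos_le[OF matrix_vector_mul_bounded_linear])

theorem lemma5p2:
  fixes f :: "real^'n \<Rightarrow> real" and g :: "real^'n \<Rightarrow> real^'n"
    and h :: "real^'n \<Rightarrow> ereal" and B :: "real^'n \<Rightarrow> real^'n^'n"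
    and psi :: "real^'n \<Rightarrow> real^'n \<Rightarrow> ereal"
    and \<theta>1 \<theta>2 \<eta>1 \<eta>2 \<gamma>1 \<gamma>2 \<gamma>3 :: real
    and x :: "nat \<Rightarrow> real^'n" and \<sigma> :: "nat \<Rightarrow> real"
    and scp t s :: "nat \<Rightarrow> real^'n"
    and fh_low \<alpha> :: real
  assumes grad_f: "\<forall>y. GDERIV f y :> g y" and C1: "continuous_on UNIV g"
    and h_proper: "proper_fun h" and h_lsc: "lsc_fun h"
    and B_sym: "\<forall>y. transpose (B y) = B y"
    and ma1: "MA1 h psi"
    and run: "R2N_run f g h B psi \<theta>1 \<theta>2 \<eta>1 \<eta>2 \<gamma>1 \<gamma>2 \<gamma>3 x \<sigma> scp t s"
    and inf_succ: "infinite {k. rho f g h B psi (x k) (s k) \<ge> ereal \<eta>1}"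
    and low: "\<forall>k. ereal (f (x k)) + h (x k) \<ge> ereal fh_low"
    and alpha_pos: "\<alpha> > 0"
    and alpha_bound: "\<forall>k. sqrt (1 / nu_step \<theta>1 (B (x k)) (\<sigma> k)) *
                         sqrt (real_of_ereal (xi_cp f g h psi (x k) (scp k))) \<ge> \<alpha>"
  shows "Cauchy x \<and> convergent x"
proof -
  define \<nu> where "\<nu> k = nu_step \<theta>1 (B (x k)) (\<sigma> k)" for k
  define \<rho> where "\<rho> k = rho f g h B psi (x k) (s k)" for k
  have par: "0 < \<theta>1" "\<theta>1 < 1" "1 < \<theta>2" "0 < \<eta>1" "\<eta>1 \<le> \<eta>2" "0 < \<gamma>3" "1 < \<gamma>1" "\<sigma> 0 > 0"
    using run unfolding R2N_run_def by blast+
  have R: "scp k \<in> P_cp f g psi (x k) (\<nu> k) \<and>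
             model f g B psi (x k) (\<sigma> k) (t k) \<le> model f g B psi (x k) (\<sigma> k) (scp k) \<and>
             s k = (if norm (t k) > \<theta>2 * norm (scp k) then scp k else t k) \<and>
             x (Suc k) = (if \<rho> k \<ge> ereal \<eta>1 then x k + s k else x k) \<and>
             (\<rho> k \<ge> ereal \<eta>2 \<longrightarrow> \<gamma>3 * \<sigma> k \<le> \<sigma> (Suc k) \<and> \<sigma> (Suc k) \<le> \<sigma> k) \<and>
             (ereal \<eta>1 \<le> \<rho> k \<and> \<rho> k < ereal \<eta>2 \<longrightarrow> \<sigma> k \<le> \<sigma> (Suc k) \<and> \<sigma> (Suc k) \<le> \<gamma>1 * \<sigma> k) \<and>
             (\<rho> k < ereal \<eta>1 \<longrightarrow> \<gamma>1 * \<sigma> k \<le> \<sigma> (Suc k) \<and> \<sigma> (Suc k) \<le> \<gamma>2 * \<sigma> k)" for k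
    using run unfolding R2N_run_def Let_def \<nu>_def \<rho>_def by blast
  have sigpos: "\<sigma> k > 0" for k
  proof (induction k)
    case 0 then show ?case using par by simp
  next
    case (Suc k)
    have "\<rho> k \<ge> ereal \<eta>2 \<or> (ereal \<eta>1 \<le> \<rho> k \<and> \<rho> k < ereal \<eta>2) \<or> \<rho> k < ereal \<eta>1" by auto
    moreover have "\<gamma>3 * \<sigma> k > 0" "\<gamma>1 * \<sigma> k > 0" using Suc par by simp_all
    ultimately show ?case using R[of k] Suc by (meson less_le_trans order.strict_trans2)
  qed
  define c where "c = \<eta>1 * (1 - \<theta>1)"
  define K where "K = 2 * \<theta>2 / (\<alpha> * c)"
  have cpos: "c > 0" using par by (simp add: c_def)
  have Kpos: "K > 0" using par cpos alpha_pos by (simp add: K_def)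
  have key: "\<exists>Hk Hs. h (x k) = ereal Hk \<and> h (x (Suc k)) = ereal Hs \<and>
     norm (x (Suc k) - x k) \<le> K * ((f (x k) + Hk) - (f (x (Suc k)) + Hs))" for k
  proof -
    define X where "X = x k"
    define C where "C = scp k"
    define S where "S = s k"
    define T where "T = t k"
    define N where "N = \<nu> k"
    define sg where "sg = \<sigma> k"
    define \<xi> where "\<xi> = real_of_ereal (xi_cp f g h psi X C)"
    have sgp: "sg > 0" using sigpos by (simp add: sg_def)
    have ab: "sqrt (1 / N) * sqrt \<xi> \<ge> \<alpha>" using alpha_bound unfolding N_def \<nu>_def \<xi>_def X_def C_def by blast
    have Np: "N > 0" using par specnorm_nonneg[of "B X"] sgp
      unfolding N_def \<nu>_def nu_step_def X_def sg_def by simp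
    have "sqrt (1/N) * sqrt \<xi> > 0" using ab alpha_pos by linarith
    moreover have "sqrt (1/N) > 0" using Np by simp
    ultimately have "sqrt \<xi> > 0" by (simp add: zero_less_mult_iff)
    hence xip: "\<xi> > 0" by simp
    have ab2: "\<alpha>\<^sup>2 \<le> \<xi> / N"
    proof -
      have "\<alpha>\<^sup>2 \<le> (sqrt (1 / N) * sqrt \<xi>)\<^sup>2" using ab alpha_pos by (simp add: power_mono)
      also have "\<dots> = \<xi> / N" using Np xip by (simp add: power_mult_distrib)
      finally show ?thesis .
    qed
    hence NA: "N * \<alpha>\<^sup>2 \<le> \<xi>" using Np by (simp add: field_simps)
    from xiA[of "f X" "h X" "phi_cp f g X C" "psi X C"] xip
    obtain HX PC where HX: "h X = ereal HX" and PC: "psi X C = ereal PC"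
      and xiv: "\<xi> = f X + HX - phi_cp f g X C - PC"
      unfolding \<xi>_def xi_cp_def by auto
    have ma: "proper_fun (psi X)" "psi X 0 = h X"
      using ma1 unfolding MA1_def by blast+
    have psi_ninf: "psi X u \<noteq> -\<infinity>" for u using ma(1) unfolding proper_fun_def by blast
    have h_ninf: "h u \<noteq> -\<infinity>" for u using h_proper unfolding proper_fun_def by blast
    have "model_cp f g psi X N C \<le> model_cp f g psi X N 0"
      using R[of k] unfolding P_cp_def C_def X_def N_def by blast
    hence cpineq: "phi_cp f g X C + 1/2 * (1/N) * (norm C)\<^sup>2 + PC \<le> f X + HX"
      using ma(2) HX PC by (simp add: model_cp_def phi_cp_def)
    have mT: "model f g B psi X sg T \<le> model f g B psi X sg C"
      using R[of k] unfolding T_def C_def X_def sg_def by blast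
    have "psi X T \<noteq> \<infinity>"
    proof
      assume "psi X T = \<infinity>"
      thus False using mT PC by (simp add: model_def)
    qed
    then obtain PT where PT: "psi X T = ereal PT" using psi_ninf[of T] by (cases "psi X T") auto
    have Sdef: "S = (if norm T > \<theta>2 * norm C then C else T)"
      using R[of k] unfolding S_def T_def C_def by blast
    obtain PS where PS: "psi X S = ereal PS"
      and mS: "phi f g B X S + 1/2 * sg * (norm S)\<^sup>2 + PS \<le> phi f g B X C + 1/2 * sg * (norm C)\<^sup>2 + PC"
      and nS: "norm S \<le> \<theta>2 * norm C"
    proof (cases "norm T > \<theta>2 * norm C")
      case True
      hence "S = C" using Sdef by simp
      thus ?thesis using that[of PC] PC par by (simp add: mult_le_cancel_right1)
    next
      case False
      hence "S = T" using Sdef by simp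
      moreover have "phi f g B X T + 1/2 * sg * (norm T)\<^sup>2 + PT \<le> phi f g B X C + 1/2 * sg * (norm C)\<^sup>2 + PC"
        using mT PT PC by (simp add: model_def)
      ultimately show ?thesis using that[of PT] PT False by simp
    qed
    have phiC: "phi f g B X C \<le> phi_cp f g X C + 1/2 * specnorm (B X) * (norm C)\<^sup>2"
      using quad_le[of C "B X"] by (simp add: phi_def phi_cp_def)
    have Nd: "specnorm (B X) + sg = \<theta>1 / N"
      using Np par specnorm_nonneg[of "B X"] sgp
      unfolding N_def \<nu>_def nu_step_def X_def sg_def by (simp add: field_simps)
    define \<Delta> where "\<Delta> = phi f g B X 0 + HX - phi f g B X S - PS"
    have phi0: "phi f g B X 0 = f X" by (simp add: phi_def)
    have "1/2 * (\<theta>1/N) * (norm C)\<^sup>2 = \<theta>1 * (1/2 * (1/N) * (norm C)\<^sup>2)" by simp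
    also have "\<dots> \<le> \<theta>1 * \<xi>" using cpineq xiv par by (intro mult_left_mono) auto
    finally have t1: "1/2 * (\<theta>1/N) * (norm C)\<^sup>2 \<le> \<theta>1 * \<xi>" .
    have "1/2 * (\<theta>1/N) * (norm C)\<^sup>2 = 1/2 * specnorm (B X) * (norm C)\<^sup>2 + 1/2 * sg * (norm C)\<^sup>2"
      by (simp add: Nd[symmetric] algebra_simps)
    moreover have nn: "0 \<le> 1/2 * sg * (norm S)\<^sup>2" using sgp by simp
    ultimately have "\<Delta> \<ge> \<xi> - \<theta>1 * \<xi>"
      using t1 mS phiC phi0 xiv unfolding \<Delta>_def by linarith
    hence Dl: "\<Delta> \<ge> (1 - \<theta>1) * \<xi>" by (simp add: algebra_simps)
    have "(1 - \<theta>1) * \<xi> > 0" using par xip by simp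
    hence Dp: "\<Delta> > 0" using Dl by linarith
    have Cb: "norm C * \<alpha> \<le> 2 * \<xi>"
    proof -
      have q: "1/2 * (1/N) * (norm C)\<^sup>2 \<le> \<xi>" using cpineq xiv by linarith
      have "(norm C)\<^sup>2 = 2 * N * (1/2 * (1/N) * (norm C)\<^sup>2)" using Np by simp
      also have "\<dots> \<le> 2 * N * \<xi>" using q Np by (intro mult_left_mono) auto
      finally have "(norm C)\<^sup>2 \<le> 2 * N * \<xi>" .
      hence "(norm C)\<^sup>2 * \<alpha>\<^sup>2 \<le> (2 * N * \<xi>) * \<alpha>\<^sup>2" by (rule mult_right_mono) simp
      hence "(norm C)\<^sup>2 * \<alpha>\<^sup>2 \<le> 2 * \<xi> * (N * \<alpha>\<^sup>2)" by (simp add: mult_ac)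
      also have "\<dots> \<le> 2 * \<xi> * \<xi>" using NA xip by (intro mult_left_mono) auto
      finally have "(norm C * \<alpha>)\<^sup>2 \<le> 2 * \<xi> * \<xi>" by (simp add: power_mult_distrib)
      moreover have "2 * \<xi> * \<xi> \<le> (2 * \<xi>)\<^sup>2" using xip by (simp add: power2_eq_square)
      ultimately have "(norm C * \<alpha>)\<^sup>2 \<le> (2 * \<xi>)\<^sup>2" by linarith
      thus ?thesis by (rule power2_le_imp_le) (use xip in simp)
    qed
    have Sb: "norm S \<le> K * (c * \<xi>)"
    proof -
      have "norm S \<le> \<theta>2 * norm C" by (rule nS)
      also have "\<dots> \<le> \<theta>2 * (2 * \<xi> / \<alpha>)"
      proof (rule mult_left_mono)
        show "norm C \<le> 2 * \<xi> / \<alpha>" using Cb alpha_pos by (simp add: pos_le_divide_eq)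
        show "0 \<le> \<theta>2" using par by simp
      qed
      also have "\<dots> = K * (c * \<xi>)" using cpos alpha_pos by (simp add: K_def field_simps)
      finally show ?thesis .
    qed
    have xs: "x (Suc k) = (if \<rho> k \<ge> ereal \<eta>1 then X + S else X)"
      using R[of k] unfolding X_def S_def by blast
    show ?thesis
    proof (cases "\<rho> k \<ge> ereal \<eta>1")
      case True
      have "\<rho> k = (ereal (f X) + ereal HX - (ereal (f (X + S)) + h (X + S))) / ereal \<Delta>"
      proof -
        have h0: "psi X 0 = ereal HX" using ma(2) HX by simp
        show ?thesis unfolding \<rho>_def rho_def \<Delta>_def X_def[symmetric] S_def[symmetric]
          using h0 HX PS by (simp add: algebra_simps)
      qed
      with True rhoB[of \<Delta> "h (X+S)" \<eta>1 "f X" HX "f (X+S)"] Dp h_ninf par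
      obtain r where r: "h (X + S) = ereal r" and ri: "\<eta>1 * \<Delta> \<le> f X + HX - f (X + S) - r" by auto
      have "c * \<xi> \<le> \<eta>1 * \<Delta>" using Dl par unfolding c_def by (simp add: mult_left_mono mult.assoc)
      hence "K * (c * \<xi>) \<le> K * (f X + HX - (f (X + S) + r))" using ri Kpos by (intro mult_left_mono) auto
      then show ?thesis using True xs r HX Sb X_def by auto
    next
      case False
      then show ?thesis using xs HX X_def by auto
    qed
  qed
  define F where "F k = f (x k) + real_of_ereal (h (x k))" for k
  have dF: "norm (x (Suc k) - x k) \<le> K * (F k - F (Suc k))" for k
    using key[of k] by (auto simp: F_def)
  have lF: "F k \<ge> fh_low" for k
  proof -
    obtain Hk where Hk: "h (x k) = ereal Hk" using key[of k] by blast
    have "ereal fh_low \<le> ereal (f (x k)) + h (x k)" using low by blast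
    thus ?thesis using Hk by (simp add: F_def)
  qed
  have "convergent x" by (rule conv_from_decrease[of x K F fh_low, OF dF lF Kpos])
  thus ?thesis by (simp add: Cauchy_convergent_iff)
qed

end
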